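(* Let $n\in\mathbb{N}$, $\hbar\in{]0,\infty[}$, $\mu\in\mathbb{R}$ and $f\in\bigoplus_k\mathscr{P}^{k,k}(\mathbb{C}^{1+n})$. Then $\Omega_{\hbar,\mu}(f)\mathbb{1}-f_{\mathrm{av}}\in\langle\mathcal{J}-\mu\rangle$.
   Context: $\mathscr{P}^{k,k}(\mathbb{C}^{1+n})$ is the span of $z^K\overline{z}^L$, $|K|=|L|=k$. Wick product: $f\star_\hbar g=\sum_K\frac{\hbar^{|K|}}{K!}\frac{\partial^{|K|}f}{\partial\overline{z}^K}\frac{\partial^{|K|}g}{\partial z^K}$; $\langle\mathcal{J}-\mu\rangle$ is the $^*$-ideal of $(\bigoplus_k\mathscr{P}^{k,k}(\mathbb{C}^{1+n}),\star_\hbar)$ (involution: complex conjugation) generated by $\mathcal{J}-\mu\mathbb{1}$, where $\mathcal{J}=\sum_jz_j\overline{z_j}$. $\tau_k$ is the linear functional on $\mathscr{P}^{k,k}$ with $\tau_k(z^K\overline{z}^L)=\delta_{K,L}\frac{K!\,n!}{(k+n)!}$. For $f=\sum_kf_k$ with $f_k\in\mathscr{P}^{k,k}$: $f_{\mathrm{av}}=\sum_k\mathcal{J}^k\tau_k(f_k)$ (pointwise powers) and $\Omega_{\hbar,\mu}(f)=\sum_k\hbar^k(\mu/\hbar)_{\downarrow,k}\tau_k(f_k)$, where $(x)_{\downarrow,k}=\prod_{j=0}^{k-1}(x-j)$. *)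

theory Defs
  imports Complex_Main
begin

text \<open>Multi-indices are functions nat => nat; the variables of C^(1+n) are
  indexed by 0..n.  A polynomial in z and conj z is represented by its
  coefficient function: p (A,B) is the coefficient of z^A (conj z)^B.\<close>

type_synonym mindex = "nat \<Rightarrow> nat"
type_synonym wpoly = "mindex \<times> mindex \<Rightarrow> complex"

definition psupp :: "wpoly \<Rightarrow> (mindex \<times> mindex) set" where
  "psupp f = {p. f p \<noteq> 0}"

definition mabs :: "mindex \<Rightarrow> nat" where
  "mabs K = (\<Sum>i\<in>{i. K i \<noteq> 0}. K i)"

definition mfact :: "mindex \<Rightarrow> nat" where
  "mfact K = (\<Prod>i\<in>{i. K i \<noteq> 0}. fact (K i))"

definition madd :: "mindex \<Rightarrow> mindex \<Rightarrow> mindex" where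
  "madd A B = (\<lambda>i. A i + B i)"

definition mle :: "mindex \<Rightarrow> mindex \<Rightarrow> bool" where
  "mle K B \<longleftrightarrow> (\<forall>i. K i \<le> B i)"

definition Alg :: "nat \<Rightarrow> wpoly set" where
  "Alg n = {f. finite (psupp f) \<and>
     (\<forall>(A,B)\<in>psupp f. (\<forall>i>n. A i = 0 \<and> B i = 0) \<and> mabs A = mabs B)}"

definition pmul :: "wpoly \<Rightarrow> wpoly \<Rightarrow> wpoly" where
  "pmul f g = (\<lambda>(E,F). \<Sum>(A,B)\<in>psupp f. \<Sum>(C,D)\<in>psupp g.
      (if madd A C = E \<and> madd B D = F then f (A,B) * g (C,D) else 0))"

definition pone :: wpoly where
  "pone = (\<lambda>(A,B). if A = (\<lambda>_. 0) \<and> B = (\<lambda>_. 0) then 1 else 0)"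

primrec ppow :: "wpoly \<Rightarrow> nat \<Rightarrow> wpoly" where
  "ppow f 0 = pone"
| "ppow f (Suc k) = pmul f (ppow f k)"

definition dzbar :: "mindex \<Rightarrow> wpoly \<Rightarrow> wpoly" where
  "dzbar K f = (\<lambda>(A,E). f (A, madd E K) * of_nat (mfact (madd E K)) / of_nat (mfact E))"

definition dz :: "mindex \<Rightarrow> wpoly \<Rightarrow> wpoly" where
  "dz K f = (\<lambda>(E,B). f (madd E K, B) * of_nat (mfact (madd E K)) / of_nat (mfact E))"

text \<open>Wick product; the sum ranges over all multi-indices K for which the
  conj-z-derivative of f can be nonzero (all other terms vanish).\<close>
definition wick :: "real \<Rightarrow> wpoly \<Rightarrow> wpoly \<Rightarrow> wpoly" where
  "wick h f g = (\<lambda>p. \<Sum>K\<in>{K. \<exists>(A,B)\<in>psupp f. mle K B}.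
      complex_of_real (h ^ mabs K / real (mfact K)) * pmul (dzbar K f) (dz K g) p)"

text \<open>Involution: complex conjugation, conj(z^A conj(z)^B) = z^B conj(z)^A.\<close>
definition invol :: "wpoly \<Rightarrow> wpoly" where
  "invol f = (\<lambda>(A,B). cnj (f (B,A)))"

inductive_set star_ideal :: "nat \<Rightarrow> real \<Rightarrow> wpoly \<Rightarrow> wpoly set"
  for n :: nat and h :: real and a :: wpoly where
  gen: "a \<in> star_ideal n h a"
| add: "x \<in> star_ideal n h a \<Longrightarrow> y \<in> star_ideal n h a \<Longrightarrow> (\<lambda>p. x p + y p) \<in> star_ideal n h a"
| smult: "x \<in> star_ideal n h a \<Longrightarrow> (\<lambda>p. c * x p) \<in> star_ideal n h a"
| lmult: "x \<in> star_ideal n h a \<Longrightarrow> g \<in> Alg n \<Longrightarrow> wick h g x \<in> star_ideal n h a"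
| rmult: "x \<in> star_ideal n h a \<Longrightarrow> g \<in> Alg n \<Longrightarrow> wick h x g \<in> star_ideal n h a"
| inv: "x \<in> star_ideal n h a \<Longrightarrow> invol x \<in> star_ideal n h a"

text \<open>J = sum_{j=0}^n z_j conj(z_j).\<close>
definition Jpoly :: "nat \<Rightarrow> wpoly" where
  "Jpoly n = (\<lambda>(A,B). if A = B \<and> (\<exists>j\<le>n. A = (\<lambda>i. if i = j then 1 else 0)) then 1 else 0)"

definition hpart :: "wpoly \<Rightarrow> nat \<Rightarrow> wpoly" where
  "hpart f k = (\<lambda>(A,B). if mabs A = k then f (A,B) else 0)"

definition tau :: "nat \<Rightarrow> nat \<Rightarrow> wpoly \<Rightarrow> complex" where
  "tau n k f = (\<Sum>(A,B)\<in>psupp f. f (A,B) *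
      (if A = B then of_real (real (mfact A) * fact n / fact (k + n)) else 0))"

definition degs :: "wpoly \<Rightarrow> nat set" where
  "degs f = (\<lambda>(A,B). mabs A) ` psupp f"

definition ffall :: "real \<Rightarrow> nat \<Rightarrow> real" where
  "ffall x k = (\<Prod>j<k. x - real j)"

definition favg :: "nat \<Rightarrow> wpoly \<Rightarrow> wpoly" where
  "favg n f = (\<lambda>p. \<Sum>k\<in>degs f. ppow (Jpoly n) k p * tau n k (hpart f k))"

definition Omega :: "nat \<Rightarrow> real \<Rightarrow> real \<Rightarrow> wpoly \<Rightarrow> complex" where
  "Omega n h \<mu> f = (\<Sum>k\<in>degs f. of_real (h ^ k * ffall (\<mu> / h) k) * tau n k (hpart f k))"

end

theory Submission
  imports Defs
begin

definition ev :: "nat \<Rightarrow> mindex" where "ev j = (\<lambda>i. if i = j then 1 else 0)"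
definition z0 :: mindex where "z0 = (\<lambda>_. 0)"
definition msub :: "mindex \<Rightarrow> mindex \<Rightarrow> mindex" where "msub E A = (\<lambda>i. E i - A i)"

lemma mabs_bound: "\<forall>i>n. K i = 0 \<Longrightarrow> mabs K = (\<Sum>i\<le>n. K i)"
  unfolding mabs_def by (rule sum.mono_neutral_left) (auto simp: not_less[symmetric])

lemma mfact_bound: "\<forall>i>n. K i = 0 \<Longrightarrow> mfact K = (\<Prod>i\<le>n. fact (K i))"
  unfolding mfact_def by (rule prod.mono_neutral_left) (auto simp: not_less[symmetric])

lemma mfact_pos: "mfact K > 0"
  unfolding mfact_def by (rule prod_pos) auto

lemma mabs_z0[simp]: "mabs z0 = 0" and mfact_z0[simp]: "mfact z0 = 1"
  by (auto simp: mabs_def mfact_def z0_def)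

lemma mabs_ev[simp]: "mabs (ev j) = 1"
  by (subst mabs_bound[of j]) (auto simp: ev_def)

lemma mfact_ev[simp]: "mfact (ev j) = 1"
proof -
  have "(\<Prod>i\<le>j. fact (ev j i)) = (1::nat)" by (rule prod.neutral) (simp add: ev_def)
  thus ?thesis by (subst mfact_bound[of j]) (auto simp: ev_def)
qed

lemma ev_ne_z0[simp]: "ev j \<noteq> z0" "z0 \<noteq> ev j"
  by (auto simp: ev_def z0_def fun_eq_iff)

lemma ev_inj[simp]: "ev j = ev m \<longleftrightarrow> j = m"
  by (auto simp: ev_def fun_eq_iff)

lemma madd_z0[simp]: "madd E z0 = E" "madd z0 E = E" by (simp_all add: madd_def z0_def)

lemma mle_z0[simp]: "mle z0 E" "mle K z0 \<longleftrightarrow> K = z0"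
  by (auto simp: mle_def z0_def fun_eq_iff)

lemma msub_z0[simp]: "msub E z0 = E" by (simp add: msub_def z0_def)

lemma mle_ev: "mle K (ev j) \<longleftrightarrow> K = z0 \<or> K = ev j"
proof
  assume a: "mle K (ev j)"
  hence k0: "\<And>i. i \<noteq> j \<Longrightarrow> K i = 0" and kj: "K j \<le> 1"
    unfolding mle_def ev_def by (metis le_zero_eq, metis)
  show "K = z0 \<or> K = ev j"
  proof (cases "K j = 0")
    case True thus ?thesis using k0 unfolding z0_def by (metis ext)
  next
    case False hence "K j = 1" using kj by simp
    thus ?thesis using k0 by (auto simp: ev_def fun_eq_iff)
  qed
qed (auto simp: mle_def ev_def z0_def)

lemma madd_ev_eq_ev: "madd E (ev j) = ev m \<Longrightarrow> E = z0 \<and> m = j"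
proof -
  assume a: "madd E (ev j) = ev m"
  have "E j + 1 = ev m j" using fun_cong[OF a, of j] by (simp add: madd_def ev_def)
  hence mj: "m = j" and "E j = 0" by (auto simp: ev_def split: if_splits)
  moreover have "E i = 0" if "i \<noteq> j" for i using fun_cong[OF a, of i] that mj by (simp add: madd_def ev_def)
  ultimately show ?thesis by (metis z0_def ext)
qed

lemma madd_ne_z0: "madd E (ev j) \<noteq> z0"
  by (auto simp: madd_def ev_def z0_def fun_eq_iff)

lemma madd_msub: "mle A E \<Longrightarrow> madd (msub E A) A = E"
  by (auto simp: madd_def msub_def mle_def fun_eq_iff)

lemma madd_cancel: "madd E K = madd E' K \<longleftrightarrow> E = E'"
  by (auto simp: madd_def fun_eq_iff)

lemma madd_iff: "madd A C = E \<longleftrightarrow> mle A E \<and> C = msub E A"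
  unfolding madd_def msub_def mle_def fun_eq_iff by (metis add_diff_cancel_left' le_add1 le_add_diff_inverse)

lemma pmul_eq:
  assumes "finite (psupp g)" "finite T" "psupp f \<subseteq> T"
  shows "pmul f g (E,F) = (\<Sum>(A,B)\<in>T. f (A,B) *
            (if mle A E \<and> mle B F then g (msub E A, msub F B) else 0))"
proof -
  have inner: "(\<Sum>(C,D)\<in>psupp g. (if madd A C = E \<and> madd B D = F then f (A,B) * g (C,D) else 0))
     = f (A,B) * (if mle A E \<and> mle B F then g (msub E A, msub F B) else 0)" for A B
  proof -
    have "(\<Sum>(C,D)\<in>psupp g. (if madd A C = E \<and> madd B D = F then f (A,B) * g (C,D) else 0))
      = (\<Sum>q\<in>psupp g. (if mle A E \<and> mle B F then (if q = (msub E A, msub F B) then f (A,B) * g q else 0) else 0))"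
      by (rule sum.cong) (auto simp: madd_iff split: if_splits)
    also have "\<dots> = (if mle A E \<and> mle B F then (if (msub E A, msub F B) \<in> psupp g then f (A,B) * g (msub E A, msub F B) else 0) else 0)"
      using assms(1) by (cases "mle A E \<and> mle B F") (simp_all only: sum.delta' if_True if_False sum.neutral_const, auto)
    also have "\<dots> = f (A,B) * (if mle A E \<and> mle B F then g (msub E A, msub F B) else 0)"
      by (auto simp: psupp_def)
    finally show ?thesis .
  qed
  have "pmul f g (E,F) = (\<Sum>(A,B)\<in>psupp f. f (A,B) *
            (if mle A E \<and> mle B F then g (msub E A, msub F B) else 0))"
    unfolding pmul_def using inner by (simp add: case_prod_beta)
  also have "\<dots> = (\<Sum>(A,B)\<in>T. f (A,B) *
            (if mle A E \<and> mle B F then g (msub E A, msub F B) else 0))"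
    by (rule sum.mono_neutral_left) (use assms in \<open>auto simp: psupp_def\<close>)
  finally show ?thesis .
qed


definition Xp :: "nat \<Rightarrow> real \<Rightarrow> wpoly" where
  "Xp n \<mu> = (\<lambda>p. Jpoly n p - of_real \<mu> * pone p)"

definition T0 :: "nat \<Rightarrow> (mindex \<times> mindex) set" where
  "T0 n = insert (z0,z0) ((\<lambda>j. (ev j, ev j)) ` {..n})"

definition Hom :: "nat \<Rightarrow> nat \<Rightarrow> wpoly \<Rightarrow> bool" where
  "Hom n k g \<longleftrightarrow> g \<in> Alg n \<and> (\<forall>(A,B)\<in>psupp g. mabs A = k)"

lemma Jpoly_val: "Jpoly n (A,B) = (if A = B \<and> (\<exists>j\<le>n. A = ev j) then 1 else 0)"
  by (simp add: Jpoly_def ev_def)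

lemma pone_val: "pone (A,B) = (if A = z0 \<and> B = z0 then 1 else 0)"
  by (simp add: pone_def z0_def)

lemma finite_T0[simp]: "finite (T0 n)" by (simp add: T0_def)

lemma psupp_J: "psupp (Jpoly n) \<subseteq> T0 n"
  by (auto simp: psupp_def T0_def Jpoly_val split: if_splits)

lemma X_val: "Xp n \<mu> (A,B) = Jpoly n (A,B) - of_real \<mu> * pone (A,B)"
  by (simp add: Xp_def)

lemma psupp_X: "psupp (Xp n \<mu>) \<subseteq> T0 n"
  by (auto simp: psupp_def T0_def X_val Jpoly_val pone_val split: if_splits)

lemma inj_evev: "inj_on (\<lambda>j. (ev j, ev j)) A"
  by (auto simp: inj_on_def)

lemma pmul_J:
  assumes "finite (psupp g)"
  shows "pmul (Jpoly n) g (E,F) = (\<Sum>j\<le>n. if mle (ev j) E \<and> mle (ev j) F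
            then g (msub E (ev j), msub F (ev j)) else 0)"
proof -
  have "pmul (Jpoly n) g (E,F) = (\<Sum>(A,B)\<in>(\<lambda>j. (ev j, ev j)) ` {..n}. Jpoly n (A,B) *
            (if mle A E \<and> mle B F then g (msub E A, msub F B) else 0))"
    by (rule pmul_eq[OF assms]) (auto simp: psupp_def Jpoly_val split: if_splits)
  also have "\<dots> = (\<Sum>j\<le>n. if mle (ev j) E \<and> mle (ev j) F
            then g (msub E (ev j), msub F (ev j)) else 0)"
    by (subst sum.reindex[OF inj_evev]) (auto simp: Jpoly_val intro!: sum.cong)
  finally show ?thesis .
qed

lemma pmul_X:
  assumes "finite (psupp g)"
  shows "pmul (Xp n \<mu>) g (E,F) = pmul (Jpoly n) g (E,F) - of_real \<mu> * g (E,F)"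
proof -
  have nin: "(z0,z0) \<notin> (\<lambda>j. (ev j, ev j)) ` {..n}" by auto
  have "pmul (Xp n \<mu>) g (E,F) = (\<Sum>(A,B)\<in>T0 n. Xp n \<mu> (A,B) *
            (if mle A E \<and> mle B F then g (msub E A, msub F B) else 0))"
    by (rule pmul_eq[OF assms finite_T0 psupp_X])
  also have "\<dots> = - of_real \<mu> * g (E,F) + (\<Sum>(A,B)\<in>(\<lambda>j. (ev j, ev j)) ` {..n}. Jpoly n (A,B) *
            (if mle A E \<and> mle B F then g (msub E A, msub F B) else 0))"
    unfolding T0_def
    by (subst sum.insert[OF _ nin]) (auto simp: X_val Jpoly_val pone_val intro!: sum.cong)
  also have "(\<Sum>(A,B)\<in>(\<lambda>j. (ev j, ev j)) ` {..n}. Jpoly n (A,B) *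
            (if mle A E \<and> mle B F then g (msub E A, msub F B) else 0)) = pmul (Jpoly n) g (E,F)"
    by (rule pmul_eq[OF assms, symmetric]) (auto simp: psupp_def Jpoly_val split: if_splits)
  finally show ?thesis by simp
qed

lemma SX: "{K. \<exists>(A,B)\<in>psupp (Xp n \<mu>). mle K B} = insert z0 (ev ` {..n})"
proof
  show "{K. \<exists>(A,B)\<in>psupp (Xp n \<mu>). mle K B} \<subseteq> insert z0 (ev ` {..n})"
  proof
    fix K assume "K \<in> {K. \<exists>(A,B)\<in>psupp (Xp n \<mu>). mle K B}"
    then obtain A B where "(A,B) \<in> T0 n" "mle K B" using psupp_X[of n \<mu>] by blast
    thus "K \<in> insert z0 (ev ` {..n})" by (auto simp: T0_def mle_ev)
  qed
  have "(ev j, ev j) \<in> psupp (Xp n \<mu>)" if "j \<le> n" for j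
    using that by (auto simp: psupp_def X_val Jpoly_val pone_val)
  thus "insert z0 (ev ` {..n}) \<subseteq> {K. \<exists>(A,B)\<in>psupp (Xp n \<mu>). mle K B}"
    by (force simp: mle_ev)
qed

lemma finite_dz: "finite (psupp g) \<Longrightarrow> finite (psupp (dz K g))"
proof -
  assume a: "finite (psupp g)"
  have "psupp (dz K g) \<subseteq> (\<lambda>(E,B). (madd E K, B)) -` psupp g"
    by (auto simp: psupp_def dz_def)
  moreover have "finite ((\<lambda>(E,B). (madd E K, B)) -` psupp g)"
    by (rule finite_vimageI[OF a]) (auto simp: inj_on_def madd_cancel)
  ultimately show ?thesis by (rule finite_subset)
qed

lemma dzbar_z0: "dzbar z0 f = f"
  using mfact_pos by (auto simp: dzbar_def fun_eq_iff)

lemma dz_z0: "dz z0 f = f"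
  using mfact_pos by (auto simp: dz_def fun_eq_iff)

lemma dzbar_ev_X:
  assumes "j \<le> n"
  shows "dzbar (ev j) (Xp n \<mu>) (A,E) = (if A = ev j \<and> E = z0 then 1 else 0)"
proof (cases "A = ev j \<and> E = z0")
  case True thus ?thesis using assms
    by (auto simp: dzbar_def X_val Jpoly_val pone_val)
next
  case False
  have "Xp n \<mu> (A, madd E (ev j)) = 0"
    using False madd_ne_z0[of E j] madd_ev_eq_ev[of E j]
    by (auto simp: X_val Jpoly_val pone_val)
  thus ?thesis using False by (simp add: dzbar_def)
qed


lemma Alg_finite: "g \<in> Alg n \<Longrightarrow> finite (psupp g)" by (simp add: Alg_def)

lemma Alg_bound: "g \<in> Alg n \<Longrightarrow> g (A,B) \<noteq> 0 \<Longrightarrow> (\<forall>i>n. A i = 0) \<and> (\<forall>i>n. B i = 0) \<and> mabs A = mabs B"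
  by (auto simp: Alg_def psupp_def)

lemma mfact_ratio:
  assumes "\<forall>i>n. E i = 0" "j \<le> n" "E j \<ge> 1"
  shows "mfact E = E j * mfact (msub E (ev j))"
proof -
  have b2: "\<forall>i>n. msub E (ev j) i = 0" using assms by (simp add: msub_def)
  have "mfact E = fact (E j) * (\<Prod>i\<in>{..n}-{j}. fact (E i))"
    using assms by (simp add: mfact_bound[OF assms(1)] prod.remove[of "{..n}" j])
  moreover have "mfact (msub E (ev j)) = fact (E j - 1) * (\<Prod>i\<in>{..n}-{j}. fact (E i))"
  proof -
    have "mfact (msub E (ev j)) = (\<Prod>i\<le>n. fact (msub E (ev j) i))" by (rule mfact_bound[OF b2])
    also have "\<dots> = fact (msub E (ev j) j) * (\<Prod>i\<in>{..n}-{j}. fact (msub E (ev j) i))"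
      using assms by (simp add: prod.remove[of "{..n}" j])
    also have "(\<Prod>i\<in>{..n}-{j}. fact (msub E (ev j) i)) = (\<Prod>i\<in>{..n}-{j}. fact (E i))"
      by (rule prod.cong) (auto simp: msub_def ev_def)
    finally show ?thesis by (simp add: msub_def ev_def)
  qed
  moreover have "fact (E j) = E j * (fact (E j - 1) :: nat)"
    using assms by (simp add: fact_reduce)
  ultimately show ?thesis by simp
qed

lemma term_ev:
  assumes g: "g \<in> Alg n" and j: "j \<le> n"
  shows "pmul (dzbar (ev j) (Xp n \<mu>)) (dz (ev j) g) (E,F) = g (E,F) * of_nat (E j)"
proof -
  have "pmul (dzbar (ev j) (Xp n \<mu>)) (dz (ev j) g) (E,F) =
     (\<Sum>(A,B)\<in>{(ev j, z0)}. dzbar (ev j) (Xp n \<mu>) (A,B) *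
            (if mle A E \<and> mle B F then dz (ev j) g (msub E A, msub F B) else 0))"
    by (rule pmul_eq[OF finite_dz[OF Alg_finite[OF g]]]) (auto simp: psupp_def dzbar_ev_X[OF j] split: if_splits)
  also have "\<dots> = (if mle (ev j) E then dz (ev j) g (msub E (ev j), F) else 0)"
    using dzbar_ev_X[OF j] by simp
  also have "\<dots> = g (E,F) * of_nat (E j)"
  proof (cases "E j = 0")
    case True
    hence "\<not> mle (ev j) E" by (auto simp: mle_def ev_def dest: spec[of _ j])
    thus ?thesis using True by simp
  next
    case False
    hence m: "mle (ev j) E" by (auto simp: mle_def ev_def)
    have "dz (ev j) g (msub E (ev j), F) = g (E,F) * of_nat (mfact E) / of_nat (mfact (msub E (ev j)))"
      by (simp add: dz_def madd_msub[OF m])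
    also have "\<dots> = g (E,F) * of_nat (E j)"
    proof (cases "g (E,F) = 0")
      case False
      hence "\<forall>i>n. E i = 0" using Alg_bound[OF g] by blast
      from mfact_ratio[OF this j] \<open>E j \<noteq> 0\<close> have "mfact E = E j * mfact (msub E (ev j))" by simp
      thus ?thesis using mfact_pos[of "msub E (ev j)"] by simp
    qed simp
    finally show ?thesis using m by simp
  qed
  finally show ?thesis .
qed


lemma wick_X:
  assumes "Hom n k g"
  shows "wick h (Xp n \<mu>) g (E,F) = pmul (Jpoly n) g (E,F) - of_real \<mu> * g (E,F) + of_real (h * k) * g (E,F)"
proof -
  have g: "g \<in> Alg n" and hk: "\<And>A B. (A,B) \<in> psupp g \<Longrightarrow> mabs A = k" using assms by (auto simp: Hom_def)
  have fin: "finite (psupp g)" using Alg_finite[OF g] .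
  have nin: "z0 \<notin> ev ` {..n}" by auto
  have inj: "inj_on ev {..n}" by (auto simp: inj_on_def)
  have "wick h (Xp n \<mu>) g (E,F) = (\<Sum>K\<in>insert z0 (ev ` {..n}).
      complex_of_real (h ^ mabs K / real (mfact K)) * pmul (dzbar K (Xp n \<mu>)) (dz K g) (E,F))"
    unfolding wick_def SX ..
  also have "\<dots> = pmul (Xp n \<mu>) g (E,F) + (\<Sum>j\<le>n. of_real h * (g (E,F) * of_nat (E j)))"
    by (simp add: sum.insert[OF _ nin] sum.reindex[OF inj] dzbar_z0 dz_z0 term_ev[OF g])
  also have "(\<Sum>j\<le>n. of_real h * (g (E,F) * of_nat (E j))) = of_real (h * k) * g (E,F)"
  proof (cases "g (E,F) = 0")
    case False
    hence "\<forall>i>n. E i = 0" and "mabs E = k" using Alg_bound[OF g] hk[of E F] by (auto simp: psupp_def)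
    hence "(\<Sum>j\<le>n. E j) = k" using mabs_bound by metis
    hence "(\<Sum>j\<le>n. of_nat (E j) :: complex) = of_nat k" by (metis of_nat_sum)
    hence "(\<Sum>j\<le>n. of_nat (E j) * g (E,F)) = of_nat k * g (E,F)" by (simp add: sum_distrib_right[symmetric])
    thus ?thesis by (simp add: sum_distrib_left[symmetric] mult.commute mult.left_commute)
  qed simp
  finally show ?thesis using pmul_X[OF fin] by simp
qed

lemma madd_ev_props:
  assumes "\<forall>i>n. C i = 0" "j \<le> n"
  shows "\<forall>i>n. madd C (ev j) i = 0" "mabs (madd C (ev j)) = mabs C + 1"
proof -
  show b: "\<forall>i>n. madd C (ev j) i = 0" using assms by (auto simp: madd_def ev_def)
  have "mabs (madd C (ev j)) = (\<Sum>i\<le>n. C i + ev j i)" using mabs_bound[OF b] by (simp add: madd_def)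
  also have "\<dots> = (\<Sum>i\<le>n. C i) + 1" using assms(2) by (simp add: sum.distrib ev_def)
  finally show "mabs (madd C (ev j)) = mabs C + 1" using mabs_bound[OF assms(1)] by simp
qed

lemma Hom_pone: "Hom n 0 pone"
proof -
  have "psupp pone = {(z0,z0)}" by (auto simp: psupp_def pone_val split: if_splits)
  moreover have "z0 i = 0" for i by (simp add: z0_def)
  ultimately show ?thesis by (auto simp: Hom_def Alg_def)
qed

lemma Hom_J:
  assumes "Hom n k g"
  shows "Hom n (Suc k) (pmul (Jpoly n) g)"
proof -
  have g: "g \<in> Alg n" and hk: "\<And>A B. (A,B) \<in> psupp g \<Longrightarrow> mabs A = k" using assms by (auto simp: Hom_def)
  have fin: "finite (psupp g)" using Alg_finite[OF g] .
  have key: "\<exists>j\<le>n. (msub E (ev j), msub F (ev j)) \<in> psupp g \<and> E = madd (msub E (ev j)) (ev j)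
       \<and> F = madd (msub F (ev j)) (ev j)"
    if "(E,F) \<in> psupp (pmul (Jpoly n) g)" for E F
  proof -
    from that have "(\<Sum>j\<le>n. if mle (ev j) E \<and> mle (ev j) F
            then g (msub E (ev j), msub F (ev j)) else 0) \<noteq> 0"
      by (simp add: psupp_def pmul_J[OF fin])
    then obtain j where j: "j \<in> {..n}" and nz: "(if mle (ev j) E \<and> mle (ev j) F
            then g (msub E (ev j), msub F (ev j)) else 0) \<noteq> 0"
      by (rule sum.not_neutral_contains_not_neutral)
    from nz have m: "mle (ev j) E" "mle (ev j) F" and gz: "g (msub E (ev j), msub F (ev j)) \<noteq> 0"
      by (auto split: if_splits)
    show ?thesis
      using j m gz madd_msub[OF m(1)] madd_msub[OF m(2)] by (auto simp: psupp_def)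
  qed
  have "psupp (pmul (Jpoly n) g) \<subseteq> (\<Union>j\<le>n. (\<lambda>(C,D). (madd C (ev j), madd D (ev j))) ` psupp g)"
  proof
    fix p assume "p \<in> psupp (pmul (Jpoly n) g)"
    then obtain E F where p: "p = (E,F)" "(E,F) \<in> psupp (pmul (Jpoly n) g)" by (cases p) auto
    from key[OF p(2)] obtain j where "j \<le> n" "(msub E (ev j), msub F (ev j)) \<in> psupp g"
      "E = madd (msub E (ev j)) (ev j)" "F = madd (msub F (ev j)) (ev j)" by blast
    thus "p \<in> (\<Union>j\<le>n. (\<lambda>(C,D). (madd C (ev j), madd D (ev j))) ` psupp g)"
      using p(1) by (auto intro!: bexI[of _ j] image_eqI[of _ _ "(msub E (ev j), msub F (ev j))"])
  qed
  hence finp: "finite (psupp (pmul (Jpoly n) g))" by (rule finite_subset) (simp add: fin)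
  have props: "(\<forall>i>n. E i = 0) \<and> (\<forall>i>n. F i = 0) \<and> mabs E = mabs F \<and> mabs E = Suc k"
    if "(E,F) \<in> psupp (pmul (Jpoly n) g)" for E F
  proof -
    from key[OF that] obtain j where j: "j \<le> n" "(msub E (ev j), msub F (ev j)) \<in> psupp g"
      and eE: "E = madd (msub E (ev j)) (ev j)" and eF: "F = madd (msub F (ev j)) (ev j)" by blast
    have b: "(\<forall>i>n. msub E (ev j) i = 0) \<and> (\<forall>i>n. msub F (ev j) i = 0) \<and> mabs (msub E (ev j)) = mabs (msub F (ev j))"
      using Alg_bound[OF g] j(2) by (auto simp: psupp_def)
    have k: "mabs (msub E (ev j)) = k" using hk j(2) by blast
    show ?thesis
    proof -
      have 1: "\<forall>i>n. E i = 0" "mabs E = mabs (msub E (ev j)) + 1"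
        using madd_ev_props[of n "msub E (ev j)" j] b j(1) by (simp_all flip: eE)
      have 2: "\<forall>i>n. F i = 0" "mabs F = mabs (msub F (ev j)) + 1"
        using madd_ev_props[of n "msub F (ev j)" j] b j(1) by (simp_all flip: eF)
      show ?thesis using 1 2 b k by simp
    qed
  qed
  show ?thesis using finp props by (auto simp: Hom_def Alg_def)
qed

lemma Hom_ppow: "Hom n k (ppow (Jpoly n) k)"
  by (induction k) (auto simp: Hom_pone Hom_J)


lemma zero_in: "(\<lambda>p. 0) \<in> star_ideal n h a"
proof -
  have "(\<lambda>p. 0 * a p) \<in> star_ideal n h a" by (rule star_ideal.smult[OF star_ideal.gen])
  thus ?thesis by simp
qed

lemma sum_in:
  assumes "\<And>k. k \<in> S \<Longrightarrow> X k \<in> star_ideal n h a"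
  shows "(\<lambda>p. \<Sum>k\<in>S. c k * X k p) \<in> star_ideal n h a"
proof (cases "finite S")
  case True
  thus ?thesis using assms
  proof (induction S rule: finite_induct)
    case empty thus ?case using zero_in by simp
  next
    case (insert x S)
    have "(\<lambda>p. (\<lambda>p. c x * X x p) p + (\<lambda>p. \<Sum>k\<in>S. c k * X k p) p) \<in> star_ideal n h a"
      by (rule star_ideal.add[OF star_ideal.smult]) (use insert in auto)
    thus ?case using insert by simp
  qed
qed (simp add: zero_in)

definition cc :: "real \<Rightarrow> real \<Rightarrow> nat \<Rightarrow> complex" where
  "cc h \<mu> k = of_real (h ^ k * ffall (\<mu> / h) k)"

lemma cc_Suc: "h > 0 \<Longrightarrow> cc h \<mu> (Suc k) = cc h \<mu> k * of_real (\<mu> - h * k)"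
  by (simp add: cc_def ffall_def field_simps)

lemma power_in:
  assumes h: "h > 0"
  shows "(\<lambda>p. ppow (Jpoly n) k p - cc h \<mu> k * pone p) \<in> star_ideal n h (Xp n \<mu>)"
proof (induction k)
  case 0 thus ?case using zero_in by (simp add: cc_def ffall_def)
next
  case (Suc k)
  let ?g = "ppow (Jpoly n) k"
  have H: "Hom n k ?g" by (rule Hom_ppow)
  hence gA: "?g \<in> Alg n" by (simp add: Hom_def)
  have W: "wick h (Xp n \<mu>) ?g \<in> star_ideal n h (Xp n \<mu>)"
    by (rule star_ideal.rmult[OF star_ideal.gen gA])
  have "(\<lambda>p. wick h (Xp n \<mu>) ?g p + (\<lambda>p. of_real (\<mu> - h * k) * (?g p - cc h \<mu> k * pone p)) p)
        \<in> star_ideal n h (Xp n \<mu>)"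
    by (rule star_ideal.add[OF W star_ideal.smult[OF Suc]])
  moreover have "(\<lambda>p. wick h (Xp n \<mu>) ?g p + (\<lambda>p. of_real (\<mu> - h * k) * (?g p - cc h \<mu> k * pone p)) p)
      = (\<lambda>p. ppow (Jpoly n) (Suc k) p - cc h \<mu> (Suc k) * pone p)"
  proof
    fix p :: "mindex \<times> mindex"
    obtain E F where p: "p = (E,F)" by (cases p)
    show "wick h (Xp n \<mu>) ?g p + (\<lambda>p. of_real (\<mu> - h * k) * (?g p - cc h \<mu> k * pone p)) p
        = ppow (Jpoly n) (Suc k) p - cc h \<mu> (Suc k) * pone p"
      unfolding p wick_X[OF H] cc_Suc[OF h] by (simp add: algebra_simps)
  qed
  ultimately show ?case by simp
qed

theorem proposition5p7:
  fixes n :: nat and h :: real and \<mu> :: real and f :: wpoly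
  assumes "0 < h" and "f \<in> Alg n"
  shows "(\<lambda>p. Omega n h \<mu> f * pone p - favg n f p)
           \<in> star_ideal n h (\<lambda>p. Jpoly n p - of_real \<mu> * pone p)"
proof -
  have "(\<lambda>p. \<Sum>k\<in>degs f. (- tau n k (hpart f k)) * (\<lambda>k p. ppow (Jpoly n) k p - cc h \<mu> k * pone p) k p)
        \<in> star_ideal n h (Xp n \<mu>)"
    by (rule sum_in) (rule power_in[OF assms(1)])
  moreover have "(\<lambda>p. \<Sum>k\<in>degs f. (- tau n k (hpart f k)) * (\<lambda>k p. ppow (Jpoly n) k p - cc h \<mu> k * pone p) k p)
     = (\<lambda>p. Omega n h \<mu> f * pone p - favg n f p)"
  proof
    fix p
    have "Omega n h \<mu> f * pone p - favg n f p
       = (\<Sum>k\<in>degs f. cc h \<mu> k * tau n k (hpart f k) * pone p - ppow (Jpoly n) k p * tau n k (hpart f k))"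
      by (simp add: Omega_def favg_def cc_def sum_distrib_right sum_subtractf)
    also have "\<dots> = (\<Sum>k\<in>degs f. (- tau n k (hpart f k)) * (\<lambda>k p. ppow (Jpoly n) k p - cc h \<mu> k * pone p) k p)"
      by (rule sum.cong) (simp_all add: algebra_simps)
    finally show "(\<Sum>k\<in>degs f. (- tau n k (hpart f k)) * (\<lambda>k p. ppow (Jpoly n) k p - cc h \<mu> k * pone p) k p)
       = Omega n h \<mu> f * pone p - favg n f p" by simp
  qed
  ultimately show ?thesis by (simp add: Xp_def)
qed

end
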